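(* Let $d\ge 3$, let $\Delta$ be a shellable simplicial $(d-1)$-sphere with facet-ridge graph $G$, and let $f(\Delta)$ be the total number of faces of $\Delta$ (including the empty face). For an acyclic orientation $\mathcal{O}$ of $G$, let $h_k^{\mathcal{O}}$ be the number of vertices of $G$ of indegree $k$ and set $f^{\mathcal{O}}=\sum_{k=0}^{d}2^k h_k^{\mathcal{O}}$. Let $M=\min\{f^{\mathcal{O}}:\mathcal{O}\text{ an acyclic orientation of }G\}$. Then $M=f(\Delta)$, and an acyclic orientation $\mathcal{O}$ of $G$ is good if and only if $f^{\mathcal{O}}=M$.
   Context: $\Delta$ is a simplicial complex homeomorphic to the $(d-1)$-sphere; facets have $d$ elements, ridges $d-1$. Shellable: there is an ordering $T_1,\dots,T_n$ of the facets with $\overline{T}_i\cap(\overline{T}_1\cup\cdots\cup\overline{T}_{i-1})$ pure $(d-2)$-dimensional for $i\ge2$ ($\overline{T}$ = all subsets of $T$). The facet-ridge graph $G$ has facets as vertices, adjacent iff they share a ridge. For $0\le k\le d$ and a face $\sigma$ with $|\sigma|=d-k$, $\mathcal{V}^\Delta_k(\sigma)$ is the set of vertices of $G$ corresponding to facets containing $\sigma$. An orientation of $G$ is good if for every such $k$ and $\sigma$ the induced orientation on $G[\mathcal{V}^\Delta_k(\sigma)]$ has exactly one sink. *)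

theory Defs
  imports "HOL-Analysis.Analysis"
begin

text \<open>Abstract simplicial complexes: a finite family of finite vertex sets, closed under
  taking subsets (so the empty face belongs to every nonempty complex).\<close>

definition simplicial_complex :: "'a set set \<Rightarrow> bool" where
  "simplicial_complex \<Delta> \<longleftrightarrow> finite \<Delta> \<and> \<Delta> \<noteq> {} \<and> (\<forall>\<sigma>\<in>\<Delta>. finite \<sigma>) \<and>
     (\<forall>\<sigma>\<in>\<Delta>. \<forall>\<tau>. \<tau> \<subseteq> \<sigma> \<longrightarrow> \<tau> \<in> \<Delta>)"

text \<open>Standard geometric realization, as a subset of the functions 'a => real:
  barycentric coordinates, with support a face.\<close>

definition geom_realization :: "'a set set \<Rightarrow> ('a \<Rightarrow> real) set" where
  "geom_realization \<Delta> = {x. (\<forall>v. 0 \<le> x v) \<and> {v. x v \<noteq> 0} \<in> \<Delta> \<and>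
                              (\<Sum>v\<in>{v. x v \<noteq> 0}. x v) = 1}"

definition is_sphere :: "'a set set \<Rightarrow> nat \<Rightarrow> bool" where
  "is_sphere \<Delta> n \<longleftrightarrow> simplicial_complex \<Delta> \<and>
     subtopology (powertop_real UNIV) (geom_realization \<Delta>) homeomorphic_space nsphere n"

definition facets :: "'a set set \<Rightarrow> 'a set set" where
  "facets \<Delta> = {F\<in>\<Delta>. \<forall>G\<in>\<Delta>. F \<subseteq> G \<longrightarrow> G = F}"

definition closure_of_faces :: "'a set set \<Rightarrow> 'a set set" where
  "closure_of_faces S = (\<Union>T\<in>S. Pow T)"

text \<open>A complex is pure of dimension m (faces with m+1 elements): all its maximal faces
  have exactly m+1 elements. Here we pass the number of elements k = m+1.\<close>

definition pure_card :: "'a set set \<Rightarrow> nat \<Rightarrow> bool" where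
  "pure_card \<Delta> k \<longleftrightarrow> (\<forall>F\<in>facets \<Delta>. card F = k)"

definition shellable :: "'a set set \<Rightarrow> nat \<Rightarrow> bool" where
  "shellable \<Delta> d \<longleftrightarrow> (\<exists>T. distinct T \<and> set T = facets \<Delta> \<and>
     (\<forall>i. 0 < i \<and> i < length T \<longrightarrow>
        pure_card (Pow (T ! i) \<inter> closure_of_faces {T ! j | j. j < i}) (d - 1)))"

definition fr_adj :: "'a set set \<Rightarrow> nat \<Rightarrow> 'a set \<Rightarrow> 'a set \<Rightarrow> bool" where
  "fr_adj \<Delta> d F G \<longleftrightarrow> F \<in> facets \<Delta> \<and> G \<in> facets \<Delta> \<and> F \<noteq> G \<and>
     (\<exists>R\<in>\<Delta>. card R = d - 1 \<and> R \<subseteq> F \<and> R \<subseteq> G)"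

text \<open>An orientation: a set of directed edges (a,b) meaning a -> b, containing exactly one
  direction of each edge of the facet-ridge graph and nothing else.\<close>

definition orientation :: "'a set set \<Rightarrow> nat \<Rightarrow> ('a set \<times> 'a set) set \<Rightarrow> bool" where
  "orientation \<Delta> d Or \<longleftrightarrow> (\<forall>(a, b)\<in>Or. fr_adj \<Delta> d a b) \<and>
     (\<forall>a b. fr_adj \<Delta> d a b \<longrightarrow> ((a, b) \<in> Or \<longleftrightarrow> (b, a) \<notin> Or))"

definition acyclic_orientation :: "'a set set \<Rightarrow> nat \<Rightarrow> ('a set \<times> 'a set) set \<Rightarrow> bool" where
  "acyclic_orientation \<Delta> d Or \<longleftrightarrow> orientation \<Delta> d Or \<and> acyclic Or"

definition indegree :: "('a set \<times> 'a set) set \<Rightarrow> 'a set \<Rightarrow> nat" where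
  "indegree Or F = card {G. (G, F) \<in> Or}"

definition h_vec :: "'a set set \<Rightarrow> ('a set \<times> 'a set) set \<Rightarrow> nat \<Rightarrow> nat" where
  "h_vec \<Delta> Or k = card {F\<in>facets \<Delta>. indegree Or F = k}"

definition f_orient :: "'a set set \<Rightarrow> nat \<Rightarrow> ('a set \<times> 'a set) set \<Rightarrow> nat" where
  "f_orient \<Delta> d Or = (\<Sum>k=0..d. 2 ^ k * h_vec \<Delta> Or k)"

definition V_sets :: "'a set set \<Rightarrow> 'a set \<Rightarrow> 'a set set" where
  "V_sets \<Delta> \<sigma> = {F\<in>facets \<Delta>. \<sigma> \<subseteq> F}"

definition good_orientation :: "'a set set \<Rightarrow> nat \<Rightarrow> ('a set \<times> 'a set) set \<Rightarrow> bool" where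
  "good_orientation \<Delta> d Or \<longleftrightarrow>
     (\<forall>k\<le>d. \<forall>\<sigma>\<in>\<Delta>. card \<sigma> = d - k \<longrightarrow>
        (\<exists>!F. F \<in> V_sets \<Delta> \<sigma> \<and> (\<forall>G\<in>V_sets \<Delta> \<sigma>. (F, G) \<notin> Or)))"

end

theory Submission
  imports Defs "HOL-Homology.Invariance_of_Domain"
begin
lemma topspace_nsphere_eq: "topspace (nsphere n) = {x. (\<Sum>i\<le>n. x i ^ 2) = 1 \<and> (\<forall>i>n. x i = 0)}"
  by (simp add: nsphere)

lemma cm_proj: "continuous_map (subtopology (powertop_real UNIV) S) euclideanreal (\<lambda>x. x k)"
  by (metis UNIV_I continuous_map_from_subtopology continuous_map_product_projection)

lemma cm_E_proj: "continuous_map (subtopology (Euclidean_space n) U) euclideanreal (\<lambda>x. x k)"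
  by (simp add: Euclidean_space_def subtopology_subtopology cm_proj)

lemma cm_sph_proj: "continuous_map (subtopology (nsphere n) U) euclideanreal (\<lambda>x. x k)"
  by (simp add: nsphere subtopology_subtopology cm_proj)

lemma sum_le_Suc_split: fixes f :: "nat \<Rightarrow> real" shows "(\<Sum>i\<le>n. f i) = (\<Sum>i<n. f i) + (f n :: real)"
  using sum.lessThan_Suc[of f n] by (simp add: lessThan_Suc_atMost)

lemma sphere_chart:
  fixes T :: "'b topology"
  assumes hom: "T homeomorphic_space nsphere n" and p: "p \<in> topspace T"
  obtains W \<psi> U0 \<phi> y0 where "openin T W" "p \<in> W"
    "continuous_map (subtopology T W) (Euclidean_space n) \<psi>" "inj_on \<psi> W"
    "openin (Euclidean_space n) U0"
    "continuous_map (subtopology (Euclidean_space n) U0) T \<phi>" "inj_on \<phi> U0" "y0 \<in> U0" "\<phi> y0 = p"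
proof -
  obtain g g' where hm: "homeomorphic_maps T (nsphere n) g g'"
    using hom homeomorphic_space_def by blast
  hence g: "continuous_map T (nsphere n) g" and g': "continuous_map (nsphere n) T g'"
    and gg: "\<And>x. x \<in> topspace T \<Longrightarrow> g' (g x) = x"
    and gg': "\<And>z. z \<in> topspace (nsphere n) \<Longrightarrow> g (g' z) = z"
    by (auto simp: homeomorphic_maps_def)
  define S where "S = topspace (nsphere n)"
  have Sdef: "z \<in> S \<longleftrightarrow> (\<Sum>i\<le>n. z i ^ 2) = 1 \<and> (\<forall>i>n. z i = 0)" for z
    by (simp add: S_def topspace_nsphere_eq)
  have z0: "g p \<in> S" using g p unfolding S_def by (meson continuous_map_image_subset_topspace image_subset_iff)
  have "\<exists>k\<le>n. g p k \<noteq> 0"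
  proof (rule ccontr)
    assume "\<not> ?thesis" then have "(\<Sum>i\<le>n. g p i ^ 2) = 0" by simp
    with z0 show False by (simp add: Sdef)
  qed
  then obtain k where k: "k \<le> n" "g p k \<noteq> 0" by blast
  define s :: real where "s = sgn (g p k)"
  have s2: "s * s = 1" using k by (simp add: s_def sgn_if)
  define \<tau> where "\<tau> i = (if i = k then n else if i = n then k else i)" for i
  define \<rho> where "\<rho> z = (\<lambda>i. if i = n then s * z k else if i = k then s * z n else z i)" for z :: "nat \<Rightarrow> real"
  have \<rho>\<rho>: "\<rho> (\<rho> z) = z" for z
    by (auto simp: \<rho>_def fun_eq_iff mult.assoc[symmetric] s2)
  have \<rho>sq: "(\<rho> z i)^2 = (z (\<tau> i))^2" for z i
  proof -
    have "(s * a)^2 = a^2" for a by (metis power2_eq_square s2 mult.commute mult.left_commute mult.right_neutral)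
    then show ?thesis by (auto simp: \<rho>_def \<tau>_def)
  qed
  have \<tau>\<tau>: "\<tau> (\<tau> i) = i" for i by (auto simp: \<tau>_def)
  have \<tau>n: "i \<le> n \<Longrightarrow> \<tau> i \<le> n" for i using k by (auto simp: \<tau>_def)
  have \<rho>S: "\<rho> z \<in> S" if "z \<in> S" for z
  proof -
    have "(\<Sum>i\<le>n. (\<rho> z i)^2) = (\<Sum>i\<le>n. (z (\<tau> i))^2)" by (simp add: \<rho>sq)
    also have "\<dots> = (\<Sum>i\<le>n. (z i)^2)"
      by (rule sum.reindex_bij_witness[of _ \<tau> \<tau>]) (auto simp: \<tau>\<tau> \<tau>n)
    finally show ?thesis using that k by (auto simp: Sdef \<rho>_def)
  qed
  have \<rho>cont: "continuous_map (nsphere n) (nsphere n) \<rho>"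
  proof -
    have "continuous_map (nsphere n) euclideanreal (\<lambda>z. \<rho> z i)" for i
      unfolding \<rho>_def
      by (auto intro!: continuous_intros continuous_map_real_mult_left simp: cm_sph_proj[of n UNIV, simplified])
    then have "continuous_map (nsphere n) (powertop_real UNIV) \<rho>"
      by (simp add: continuous_map_componentwise_UNIV)
    moreover have "\<rho> \<in> topspace (nsphere n) \<rightarrow> {x. (\<Sum>i\<le>n. x i ^ 2) = 1 \<and> (\<forall>i>n. x i = 0)}"
    proof (rule Pi_I)
      fix z assume "z \<in> topspace (nsphere n)"
      then have "\<rho> z \<in> S" using \<rho>S S_def by blast
      then show "\<rho> z \<in> {x. (\<Sum>i\<le>n. x i ^ 2) = 1 \<and> (\<forall>i>n. x i = 0)}" by (simp add: Sdef)
    qed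
    ultimately show ?thesis
      by (subst (2) nsphere) (simp add: continuous_map_in_subtopology)
  qed
  define G where "G = \<rho> \<circ> g"
  define G' where "G' = g' \<circ> \<rho>"
  have G: "continuous_map T (nsphere n) G" unfolding G_def using g \<rho>cont by (rule continuous_map_compose)
  have G': "continuous_map (nsphere n) T G'" unfolding G'_def using \<rho>cont g' by (rule continuous_map_compose)
  have GS: "x \<in> topspace T \<Longrightarrow> G x \<in> S" for x using G unfolding S_def by (meson continuous_map_image_subset_topspace image_subset_iff)
  have GG: "x \<in> topspace T \<Longrightarrow> G' (G x) = x" for x by (simp add: G_def G'_def \<rho>\<rho> gg)
  have GG': "z \<in> S \<Longrightarrow> G (G' z) = z" for z using \<rho>S by (simp add: G_def G'_def \<rho>\<rho> gg' S_def)
  have Gpn: "G p n > 0" using k by (simp add: G_def \<rho>_def s_def sgn_if)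
  define \<pi> where "\<pi> z = (\<lambda>i. if i < n then z i else 0)" for z :: "nat \<Rightarrow> real"
  define lift where "lift y = (\<lambda>i. if i < n then y i else if i = n then sqrt (1 - (\<Sum>j<n. y j ^2)) else 0)" for y :: "nat \<Rightarrow> real"
  have lift\<pi>: "lift (\<pi> z) = z" if "z \<in> S" "z n > 0" for z
  proof -
    have "(\<Sum>j<n. z j ^2) + z n ^ 2 = 1" using that by (simp add: Sdef sum_le_Suc_split)
    then have "sqrt (1 - (\<Sum>j<n. z j ^2)) = z n" using that(2) by (simp add: real_sqrt_unique) 
    then show ?thesis using that by (auto simp: fun_eq_iff lift_def \<pi>_def Sdef)
  qed
  have \<pi>lift: "\<pi> (lift y) = y" if "y \<in> topspace (Euclidean_space n)" for y
    using that by (auto simp: fun_eq_iff lift_def \<pi>_def topspace_Euclidean_space)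
  define W where "W = {x \<in> topspace T. G x n > 0}"
  have W: "openin T W"
  proof -
    have "continuous_map T euclideanreal (\<lambda>x. G x n)"
      using continuous_map_compose[OF G continuous_map_nsphere_projection[of n n]] by (simp add: o_def)
    from openin_continuous_map_preimage[OF this, of "{0<..}"] show ?thesis
      by (simp add: W_def)
  qed
  have pW: "p \<in> W" using p Gpn by (simp add: W_def)
  define \<psi> where "\<psi> = \<pi> \<circ> G"
  have \<psi>c: "continuous_map (subtopology T W) (Euclidean_space n) \<psi>"
  proof -
    have "continuous_map T euclideanreal (\<lambda>x. G x i)" for i
      using continuous_map_compose[OF G continuous_map_nsphere_projection[of n i]] by (simp add: o_def)
    then have "continuous_map T euclideanreal (\<lambda>x. \<psi> x i)" for i
      by (auto simp: \<psi>_def \<pi>_def)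
    then have "continuous_map T (Euclidean_space n) \<psi>"
      by (auto simp: Euclidean_space_def continuous_map_in_subtopology continuous_map_componentwise_UNIV \<psi>_def \<pi>_def)
    then show ?thesis by (simp add: continuous_map_from_subtopology)
  qed
  have \<psi>i: "inj_on \<psi> W"
  proof
    fix x x' assume "x \<in> W" "x' \<in> W" "\<psi> x = \<psi> x'"
    then have "lift (\<pi> (G x)) = lift (\<pi> (G x'))" by (simp add: \<psi>_def)
    then have "G x = G x'" using \<open>x \<in> W\<close> \<open>x' \<in> W\<close> by (simp add: lift\<pi> GS W_def)
    then show "x = x'" using \<open>x \<in> W\<close> \<open>x' \<in> W\<close> GG W_def by (metis (no_types, lifting) mem_Collect_eq)
  qed
  define U0 where "U0 = {y \<in> topspace (Euclidean_space n). (\<Sum>j<n. y j ^2) < 1}"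
  have U0: "openin (Euclidean_space n) U0"
  proof -
    have "continuous_map (Euclidean_space n) euclideanreal (\<lambda>y. (\<Sum>j<n. y j ^2))"
      by (intro continuous_intros) (simp_all add: cm_E_proj[of n UNIV, simplified])
    from openin_continuous_map_preimage[OF this, of "{..<1}"] show ?thesis
      by (simp add: U0_def)
  qed
  define \<phi> where "\<phi> = G' \<circ> lift"
  have liftS: "lift y \<in> S" if "y \<in> U0" for y
  proof -
    have "(\<Sum>i\<le>n. lift y i ^ 2) = (\<Sum>i<n. lift y i ^ 2) + lift y n ^ 2" by (rule sum_le_Suc_split)
    also have "\<dots> = (\<Sum>i<n. y i ^ 2) + (1 - (\<Sum>j<n. y j ^2))"
      using that by (simp add: lift_def U0_def)
    finally show ?thesis by (auto simp: Sdef lift_def)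
  qed
  have liftc: "continuous_map (subtopology (Euclidean_space n) U0) (nsphere n) lift"
  proof -
    have "continuous_map (subtopology (Euclidean_space n) U0) euclideanreal (\<lambda>y. lift y i)" for i
      unfolding lift_def
      by (auto intro!: continuous_intros simp: cm_E_proj)
    then have "continuous_map (subtopology (Euclidean_space n) U0) (powertop_real UNIV) lift"
      by (simp add: continuous_map_componentwise_UNIV)
    moreover have "lift \<in> topspace (subtopology (Euclidean_space n) U0) \<rightarrow> {x. (\<Sum>i\<le>n. x i ^ 2) = 1 \<and> (\<forall>i>n. x i = 0)}"
    proof (rule Pi_I)
      fix z assume "z \<in> topspace (subtopology (Euclidean_space n) U0)"
      then have "lift z \<in> S" using liftS U0_def by auto
      then show "lift z \<in> {x. (\<Sum>i\<le>n. x i ^ 2) = 1 \<and> (\<forall>i>n. x i = 0)}" by (simp add: Sdef)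
    qed
    ultimately show ?thesis
      by (subst nsphere) (simp add: continuous_map_in_subtopology)
  qed
  have \<phi>c: "continuous_map (subtopology (Euclidean_space n) U0) T \<phi>"
    unfolding \<phi>_def using liftc G' by (rule continuous_map_compose)
  have \<phi>i: "inj_on \<phi> U0"
  proof
    fix y y' assume yy: "y \<in> U0" "y' \<in> U0" "\<phi> y = \<phi> y'"
    then have "G (G' (lift y)) = G (G' (lift y'))" by (simp add: \<phi>_def)
    then have "lift y = lift y'" using yy liftS GG' by simp
    then show "y = y'" using yy \<pi>lift U0_def by (metis (no_types, lifting) mem_Collect_eq)
  qed
  define y0 where "y0 = \<pi> (G p)"
  have y0: "y0 \<in> U0"
  proof -
    have "(\<Sum>j<n. G p j ^2) + G p n ^ 2 = 1" using GS[OF p] by (simp add: Sdef sum_le_Suc_split)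
    then have "(\<Sum>j<n. G p j ^2) < 1" using Gpn by (smt (verit) zero_less_power)
    then show ?thesis by (simp add: U0_def y0_def \<pi>_def topspace_Euclidean_space)
  qed
  have "\<phi> y0 = p" using lift\<pi>[OF GS[OF p] Gpn] GG[OF p] by (simp add: \<phi>_def y0_def)
  show thesis using that W pW \<psi>c \<psi>i U0 \<phi>c \<phi>i y0 \<open>\<phi> y0 = p\<close> by blast
qed

lemma iod_nbhd:
  assumes hom: "T homeomorphic_space nsphere n" and Om: "openin (Euclidean_space n) Om"
    and h: "continuous_map (subtopology (Euclidean_space n) Om) T h" and hi: "inj_on h Om" and y: "y \<in> Om"
  shows "\<exists>V. openin T V \<and> h y \<in> V \<and> V \<subseteq> h ` Om"
proof -
  have Osub: "Om \<subseteq> topspace (Euclidean_space n)" using Om openin_subset by blast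
  have tO: "topspace (subtopology (Euclidean_space n) Om) = Om" using Osub by auto
  have p: "h y \<in> topspace T" using h y tO by (metis continuous_map_image_subset_topspace image_subset_iff)
  obtain W \<psi> where W: "openin T W" "h y \<in> W"
    and \<psi>c: "continuous_map (subtopology T W) (Euclidean_space n) \<psi>" and \<psi>i: "inj_on \<psi> W"
    using sphere_chart[OF hom p] by metis
  have Wsub: "W \<subseteq> topspace T" using W openin_subset by blast
  define Oq where "Oq = {z \<in> Om. h z \<in> W}"
  have "openin (subtopology (Euclidean_space n) Om) Oq"
  proof -
    have "{z \<in> Om. h z \<in> W} = {x \<in> topspace (Euclidean_space n). x \<in> Om \<and> h x \<in> W}" using Osub by auto
    then show ?thesis using openin_continuous_map_preimage[OF h W(1)] tO by (simp add: Oq_def)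
  qed
  then have Oqo: "openin (Euclidean_space n) Oq" using Om openin_trans_full by blast
  have hc': "continuous_map (subtopology (Euclidean_space n) Oq) (subtopology T W) h"
  proof -
    have "continuous_map (subtopology (Euclidean_space n) Oq) T h"
      by (rule continuous_map_from_subtopology_mono[OF h]) (auto simp: Oq_def)
    then show ?thesis by (auto simp: continuous_map_in_subtopology Oq_def)
  qed
  have c: "continuous_map (subtopology (Euclidean_space n) Oq) (Euclidean_space n) (\<psi> \<circ> h)"
    using hc' \<psi>c by (rule continuous_map_compose)
  have i: "inj_on (\<psi> \<circ> h) Oq"
    by (rule comp_inj_on) (use hi \<psi>i Oq_def inj_on_subset in \<open>auto intro: inj_on_subset\<close>)
  have img: "openin (Euclidean_space n) ((\<psi> \<circ> h) ` Oq)"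
    by (rule invariance_of_domain_Euclidean_space[OF Oqo c i])
  define V where "V = {x \<in> W. \<psi> x \<in> (\<psi> \<circ> h) ` Oq}"
  have "openin (subtopology T W) V"
    using openin_continuous_map_preimage[OF \<psi>c img] Wsub by (simp add: V_def Int_absorb1)
  then have Vo: "openin T V" using W openin_trans_full by blast
  have "y \<in> Oq" using y W by (simp add: Oq_def)
  then have "h y \<in> V" using W by (auto simp: V_def)
  moreover have "V \<subseteq> h ` Om"
  proof
    fix x assume "x \<in> V"
    then obtain z where z: "z \<in> Oq" "\<psi> x = \<psi> (h z)" "x \<in> W" by (auto simp: V_def)
    then have "x = h z" using \<psi>i Oq_def by (auto dest: inj_onD)
    then show "x \<in> h ` Om" using z Oq_def by auto
  qed
  ultimately show ?thesis using Vo by blast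
qed

lemma iod_bd:
  assumes hom: "T homeomorphic_space nsphere n" and V: "openin T V"
    and \<theta>: "continuous_map (subtopology T V) (Euclidean_space n) \<theta>" and \<theta>i: "inj_on \<theta> V" and p: "p \<in> V"
  shows "\<exists>U. openin (Euclidean_space n) U \<and> \<theta> p \<in> U \<and> U \<subseteq> \<theta> ` V"
proof -
  have pT: "p \<in> topspace T" using V p openin_subset by blast
  obtain U0 \<phi> y0 where U0: "openin (Euclidean_space n) U0"
    and \<phi>c: "continuous_map (subtopology (Euclidean_space n) U0) T \<phi>" and \<phi>i: "inj_on \<phi> U0"
    and y0: "y0 \<in> U0" "\<phi> y0 = p"
    using sphere_chart[OF hom pT] by metis
  have tU: "topspace (subtopology (Euclidean_space n) U0) = U0" using U0 openin_subset by auto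
  define Om where "Om = {y \<in> U0. \<phi> y \<in> V}"
  have "openin (subtopology (Euclidean_space n) U0) Om"
  proof -
    have "{y \<in> U0. \<phi> y \<in> V} = {x \<in> topspace (Euclidean_space n). x \<in> U0 \<and> \<phi> x \<in> V}" using tU by auto
    then show ?thesis using openin_continuous_map_preimage[OF \<phi>c V] tU by (simp add: Om_def)
  qed
  then have Oo: "openin (Euclidean_space n) Om" using U0 openin_trans_full by blast
  have \<phi>c': "continuous_map (subtopology (Euclidean_space n) Om) (subtopology T V) \<phi>"
  proof -
    have "continuous_map (subtopology (Euclidean_space n) Om) T \<phi>"
      by (rule continuous_map_from_subtopology_mono[OF \<phi>c]) (auto simp: Om_def)
    then show ?thesis by (auto simp: continuous_map_in_subtopology Om_def)
  qed
  have c: "continuous_map (subtopology (Euclidean_space n) Om) (Euclidean_space n) (\<theta> \<circ> \<phi>)"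
    using \<phi>c' \<theta> by (rule continuous_map_compose)
  have i: "inj_on (\<theta> \<circ> \<phi>) Om"
    by (rule comp_inj_on) (use \<theta>i \<phi>i Om_def in \<open>auto intro: inj_on_subset\<close>)
  have img: "openin (Euclidean_space n) ((\<theta> \<circ> \<phi>) ` Om)"
    by (rule invariance_of_domain_Euclidean_space[OF Oo c i])
  have "y0 \<in> Om" using y0 p by (simp add: Om_def)
  then have "\<theta> p \<in> (\<theta> \<circ> \<phi>) ` Om" using y0 by force
  moreover have "(\<theta> \<circ> \<phi>) ` Om \<subseteq> \<theta> ` V" by (auto simp: Om_def)
  ultimately show ?thesis using img by blast
qed

lemma openin_ray:
  assumes V: "openin (subtopology (powertop_real UNIV) S) V" and p: "p \<in> V"
  shows "\<exists>t>0. \<forall>s. 0 \<le> s \<and> s \<le> t \<longrightarrow> (\<lambda>v. p v + s * w v) \<in> S \<longrightarrow> (\<lambda>v. p v + s * w v) \<in> V"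
proof -
  obtain U where U: "openin (powertop_real UNIV) U" "V = S \<inter> U"
    using V by (auto simp: openin_subtopology)
  define q where "q s = (\<lambda>v. p v + s * w v)" for s :: real
  have qc: "continuous_map euclideanreal (powertop_real UNIV) q"
    unfolding q_def by (auto simp: continuous_map_componentwise_UNIV intro!: continuous_intros)
  have "openin euclideanreal {s \<in> topspace euclideanreal. q s \<in> U}"
    by (rule openin_continuous_map_preimage[OF qc U(1)])
  then have "open {s. q s \<in> U}" by simp
  moreover have "q 0 \<in> U" using p U by (simp add: q_def)
  ultimately obtain e where e: "e > 0" "ball 0 e \<subseteq> {s. q s \<in> U}"
    by (metis mem_Collect_eq open_contains_ball)
  show ?thesis
  proof (intro exI[of _ "e/2"] conjI allI impI)
    show "e/2 > 0" using e by simp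
    fix s assume "0 \<le> s \<and> s \<le> e/2" "(\<lambda>v. p v + s * w v) \<in> S"
    then have "s \<in> ball 0 e" using e by (simp add: dist_real_def)
    then have "q s \<in> U" using e by auto
    then show "(\<lambda>v. p v + s * w v) \<in> V" using U \<open>(\<lambda>v. p v + s * w v) \<in> S\<close> by (simp add: q_def)
  qed
qed

lemma face_in_facet:
  assumes sc: "simplicial_complex \<Delta>" and s: "\<sigma> \<in> \<Delta>"
  shows "\<exists>F\<in>facets \<Delta>. \<sigma> \<subseteq> F"
proof -
  have fin: "finite {\<tau>\<in>\<Delta>. \<sigma> \<subseteq> \<tau>}" using sc by (simp add: simplicial_complex_def)
  obtain M where M: "M \<in> {\<tau>\<in>\<Delta>. \<sigma> \<subseteq> \<tau>}" "\<forall>b\<in>{\<tau>\<in>\<Delta>. \<sigma> \<subseteq> \<tau>}. M \<le> b \<longrightarrow> M = b"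
    using finite_has_maximal[OF fin] s by blast
  then have "M \<in> facets \<Delta>" by (auto simp: facets_def)
  then show ?thesis using M by blast
qed

lemma face_finite: "simplicial_complex \<Delta> \<Longrightarrow> \<sigma> \<in> \<Delta> \<Longrightarrow> finite \<sigma>"
  by (simp add: simplicial_complex_def)

lemma face_sub: "simplicial_complex \<Delta> \<Longrightarrow> \<sigma> \<in> \<Delta> \<Longrightarrow> \<tau> \<subseteq> \<sigma> \<Longrightarrow> \<tau> \<in> \<Delta>"
  by (auto simp: simplicial_complex_def)

lemma inX:
  assumes sc: "simplicial_complex \<Delta>" and s: "\<sigma> \<in> \<Delta>" and nn: "\<And>v. 0 \<le> x v"
    and supp: "\<And>v. x v \<noteq> 0 \<Longrightarrow> v \<in> \<sigma>" and sm: "(\<Sum>v\<in>\<sigma>. x v) = 1"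
  shows "x \<in> geom_realization \<Delta>"
proof -
  have sub: "{v. x v \<noteq> 0} \<subseteq> \<sigma>" using supp by blast
  have "(\<Sum>v\<in>{v. x v \<noteq> 0}. x v) = (\<Sum>v\<in>\<sigma>. x v)"
    by (rule sum.mono_neutral_left) (use sub face_finite[OF sc s] in auto)
  then show ?thesis using sm nn face_sub[OF sc s sub] by (simp add: geom_realization_def)
qed

lemma X_nn: "x \<in> geom_realization \<Delta> \<Longrightarrow> 0 \<le> x v"
  by (simp add: geom_realization_def)

lemma X_supp: "x \<in> geom_realization \<Delta> \<Longrightarrow> {v. x v \<noteq> 0} \<in> \<Delta>"
  by (simp add: geom_realization_def)

lemma X_sum:
  assumes "x \<in> geom_realization \<Delta>" "finite \<sigma>" "{v. x v \<noteq> 0} \<subseteq> \<sigma>"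
  shows "(\<Sum>v\<in>\<sigma>. x v) = 1"
proof -
  have "(\<Sum>v\<in>{v. x v \<noteq> 0}. x v) = (\<Sum>v\<in>\<sigma>. x v)"
    by (rule sum.mono_neutral_left) (use assms in auto)
  then show ?thesis using assms(1) by (simp add: geom_realization_def)
qed

lemma topspace_T: "topspace (subtopology (powertop_real UNIV) X) = X"
  by simp

lemma ridge_not_one:
  assumes sc: "simplicial_complex \<Delta>"
    and hom: "subtopology (powertop_real UNIV) (geom_realization \<Delta>) homeomorphic_space nsphere (Suc m)"
    and R: "R \<in> \<Delta>" "card R = Suc m"
    and F1: "insert a R \<in> facets \<Delta>" "a \<notin> R"
    and only: "\<And>F. F \<in> facets \<Delta> \<Longrightarrow> R \<subseteq> F \<Longrightarrow> F = insert a R"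
  shows False
proof -
  define X where "X = geom_realization \<Delta>"
  define T where "T = subtopology (powertop_real UNIV) X"
  have tT: "topspace T = X" by (simp add: T_def)
  have finR: "finite R" using face_finite[OF sc R(1)] .
  obtain r where r: "bij_betw r {..<Suc m} R"
    using ex_bij_betw_nat_finite[OF finR] R(2) by (metis atLeast0LessThan)
  have rR: "i < Suc m \<Longrightarrow> r i \<in> R" for i using r by (auto simp: bij_betw_def)
  have Rr: "v \<in> R \<Longrightarrow> \<exists>i<Suc m. v = r i" for v using r by (auto simp: bij_betw_def)
  have rinj: "i < Suc m \<Longrightarrow> j < Suc m \<Longrightarrow> r i = r j \<Longrightarrow> i = j" for i j
    using r by (auto simp: bij_betw_def dest: inj_onD)
  define c0 :: real where "c0 = 1 / real (Suc m)"
  have c0: "c0 > 0" by (simp add: c0_def)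
  define p where "p = (\<lambda>v. if v \<in> R then c0 else 0)"
  have pX: "p \<in> X" unfolding X_def
    by (rule inX[OF sc R(1)]) (auto simp: p_def c0_def R(2) less_imp_le c0 split: if_splits)
  define B where "B = {x \<in> X. (\<Prod>v\<in>R. x v) > 0}"
  have Bo: "openin T B"
  proof -
    have "continuous_map T euclideanreal (\<lambda>x. \<Prod>v\<in>R. x v)"
      unfolding T_def by (intro continuous_intros finR cm_proj)
    from openin_continuous_map_preimage[OF this, of "{0<..}"] show ?thesis
      by (simp add: B_def tT)
  qed
  have Bpos: "x v > 0" if "x \<in> B" "v \<in> R" for x v
  proof -
    have "(\<Prod>v\<in>R. x v) \<noteq> 0" using that by (simp add: B_def)
    then have "x v \<noteq> 0" using that finR by (auto simp: prod_zero_iff)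
    moreover have "x v \<ge> 0" using that X_nn by (auto simp: B_def X_def)
    ultimately show ?thesis by simp
  qed
  have Bsupp: "{v. x v \<noteq> 0} \<subseteq> insert a R" if "x \<in> B" for x
  proof -
    have s: "{v. x v \<noteq> 0} \<in> \<Delta>" using that X_supp by (auto simp: B_def X_def)
    have "R \<subseteq> {v. x v \<noteq> 0}" using Bpos[OF that] by force
    moreover obtain F where "F \<in> facets \<Delta>" "{v. x v \<noteq> 0} \<subseteq> F" using face_in_facet[OF sc s] by blast
    ultimately show ?thesis using only by blast
  qed
  have finF1: "finite (insert a R)" using finR by simp
  have Bsum: "(\<Sum>v\<in>insert a R. x v) = 1" if "x \<in> B" for x
    using X_sum[OF _ finF1 Bsupp[OF that], of \<Delta>] that by (simp add: B_def X_def)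
  define \<theta> where "\<theta> x = (\<lambda>i. if i < m then x (r i) else if i = m then x a else 0)" for x :: "'a \<Rightarrow> real"
  have \<theta>c: "continuous_map (subtopology T B) (Euclidean_space (Suc m)) \<theta>"
  proof -
    have "continuous_map (subtopology T B) euclideanreal (\<lambda>x. \<theta> x i)" for i
      unfolding \<theta>_def T_def subtopology_subtopology by (auto intro!: continuous_intros cm_proj)
    then show ?thesis
      by (auto simp: Euclidean_space_def continuous_map_in_subtopology continuous_map_componentwise_UNIV \<theta>_def)
  qed
  have \<theta>i: "inj_on \<theta> B"
  proof
    fix x x' assume xx: "x \<in> B" "x' \<in> B" "\<theta> x = \<theta> x'"
    have e1: "x (r i) = x' (r i)" if "i < m" for i
      using fun_cong[OF xx(3), of i] that by (simp add: \<theta>_def)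
    have e2: "x a = x' a" using fun_cong[OF xx(3), of m] by (simp add: \<theta>_def)
    have e3: "x v = x' v" if "v \<notin> insert a R" for v
      using Bsupp[OF xx(1)] Bsupp[OF xx(2)] that by (metis (mono_tags, lifting) mem_Collect_eq subsetD)
    have e4: "x v = x' v" if vin: "v \<in> insert a R - {r m}" for v
    proof -
      consider "v = a" | "v \<in> R" "v \<noteq> r m" using vin by blast
      then show ?thesis
      proof cases
        case 1 then show ?thesis using e2 by simp
      next
        case 2
        then obtain i where "i < Suc m" "v = r i" using Rr by blast
        then have "i < m" using 2 by (metis less_antisym)
        then show ?thesis using e1 \<open>v = r i\<close> by simp
      qed
    qed
    have rmF: "r m \<in> insert a R" using rR by simp
    have "x (r m) + (\<Sum>v\<in>insert a R - {r m}. x v) = 1"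
      using Bsum[OF xx(1)] sum.remove[OF finF1 rmF, of x] by simp
    moreover have "x' (r m) + (\<Sum>v\<in>insert a R - {r m}. x' v) = 1"
      using Bsum[OF xx(2)] sum.remove[OF finF1 rmF, of x'] by simp
    moreover have "(\<Sum>v\<in>insert a R - {r m}. x v) = (\<Sum>v\<in>insert a R - {r m}. x' v)"
      using e4 by (rule sum.cong[OF refl])
    ultimately have e5: "x (r m) = x' (r m)" by linarith
    show "x = x'"
    proof
      fix v show "x v = x' v"
        using e3 e4 e5 by (cases "v \<in> insert a R - {r m}") auto
    qed
  qed
  have pB: "p \<in> B" using pX c0 by (simp add: B_def p_def)
  obtain U where U: "openin (Euclidean_space (Suc m)) U" "\<theta> p \<in> U" "U \<subseteq> \<theta> ` B"
    using iod_bd[OF hom[folded X_def, folded T_def] Bo \<theta>c \<theta>i pB] by blast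
  define w :: "nat \<Rightarrow> real" where "w = (\<lambda>i. if i = m then -1 else 0)"
  obtain t where t: "t > 0" "\<And>s. 0 \<le> s \<and> s \<le> t \<Longrightarrow> (\<lambda>v. \<theta> p v + s * w v) \<in> {x. \<forall>i\<ge>Suc m. x i = 0} \<Longrightarrow> (\<lambda>v. \<theta> p v + s * w v) \<in> U"
    using openin_ray[OF U(1)[unfolded Euclidean_space_def] U(2), of w] by blast
  have "(\<lambda>v. \<theta> p v + t * w v) \<in> U"
    using t by (auto simp: \<theta>_def w_def)
  then obtain x where x: "x \<in> B" "(\<lambda>v. \<theta> p v + t * w v) = \<theta> x" using U(3) by blast
  have "\<theta> p m + t * w m = \<theta> x m" using fun_cong[OF x(2), of m] by simp
  then have "- t = x a" using F1(2) by (simp add: \<theta>_def w_def p_def)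
  moreover have "x a \<ge> 0" using x(1) X_nn by (auto simp: B_def X_def)
  ultimately show False using t(1) by simp
qed

lemma ridge_not_three:
  assumes sc: "simplicial_complex \<Delta>"
    and hom: "subtopology (powertop_real UNIV) (geom_realization \<Delta>) homeomorphic_space nsphere (Suc m)"
    and R: "R \<in> \<Delta>" "card R = Suc m"
    and abc: "insert a R \<in> \<Delta>" "insert b R \<in> \<Delta>" "insert c R \<in> \<Delta>" "a \<notin> R" "b \<notin> R" "c \<notin> R"
       "a \<noteq> b" "a \<noteq> c" "b \<noteq> c"
  shows False
proof -
  define X where "X = geom_realization \<Delta>"
  define T where "T = subtopology (powertop_real UNIV) X"
  have tT: "topspace T = X" by (simp add: T_def)
  have finR: "finite R" using face_finite[OF sc R(1)] .
  obtain r where r: "bij_betw r {..<Suc m} R"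
    using ex_bij_betw_nat_finite[OF finR] R(2) by (metis atLeast0LessThan)
  have rR: "i < Suc m \<Longrightarrow> r i \<in> R" for i using r by (auto simp: bij_betw_def)
  have Rr: "v \<in> R \<Longrightarrow> \<exists>i<Suc m. v = r i" for v using r by (auto simp: bij_betw_def)
  have rinj: "inj_on r {..<Suc m}" using r by (auto simp: bij_betw_def)
  define idx where "idx = the_inv_into {..<Suc m} r"
  have idxr: "j < Suc m \<Longrightarrow> idx (r j) = j" for j
    using the_inv_into_f_f[OF rinj] by (simp add: idx_def)
  define c0 :: real where "c0 = 1 / real (Suc m)"
  have c0: "c0 > 0" by (simp add: c0_def)
  have c0m: "real (Suc m) * c0 = 1" by (simp add: c0_def)
  define p where "p = (\<lambda>v. if v \<in> R then c0 else 0)"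
  define h where "h y = (\<lambda>v. if v \<in> R then (if idx v < m then y (idx v) else 1 - (\<Sum>i<m. y i) - \<bar>y m\<bar>)
      else if v = a then max (y m) 0 else if v = b then max (- y m) 0 else 0)" for y :: "nat \<Rightarrow> real"
  have hr: "h y (r j) = (if j < m then y j else 1 - (\<Sum>i<m. y i) - \<bar>y m\<bar>)" if "j < Suc m" for y j
    using that rR idxr by (simp add: h_def)
  have ha: "h y a = max (y m) 0" for y using abc by (simp add: h_def)
  have hb: "h y b = max (- y m) 0" for y using abc by (simp add: h_def)
  have hout: "h y v = 0" if "v \<notin> R" "v \<noteq> a" "v \<noteq> b" for y v using that by (simp add: h_def)
  have sR: "(\<Sum>v\<in>R. h y v) = 1 - \<bar>y m\<bar>" for y
  proof -
    have "(\<Sum>v\<in>R. h y v) = (\<Sum>j<Suc m. h y (r j))"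
      using sum.reindex_bij_betw[OF r, of "h y"] by simp
    also have "\<dots> = (\<Sum>j<m. h y (r j)) + h y (r m)" by simp
    also have "\<dots> = (\<Sum>j<m. y j) + (1 - (\<Sum>i<m. y i) - \<bar>y m\<bar>)"
      using hr by simp
    finally show ?thesis by simp
  qed
  define Om where "Om = {y \<in> topspace (Euclidean_space (Suc m)). (\<Sum>i<m. \<bar>y i - c0\<bar>) + \<bar>y m\<bar> < c0 / 2}"
  have Omo: "openin (Euclidean_space (Suc m)) Om"
  proof -
    have "continuous_map (Euclidean_space (Suc m)) euclideanreal (\<lambda>y. (\<Sum>i<m. \<bar>y i - c0\<bar>) + \<bar>y m\<bar>)"
      by (intro continuous_intros) (simp_all add: cm_E_proj[of _ UNIV, simplified])
    from openin_continuous_map_preimage[OF this, of "{..<c0/2}"] show ?thesis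
      by (simp add: Om_def)
  qed
  have Om_pos: "y j > c0 / 2" if "y \<in> Om" "j < m" for y j
  proof -
    have "\<bar>y j - c0\<bar> \<le> (\<Sum>i<m. \<bar>y i - c0\<bar>)"
      by (rule member_le_sum) (use that in auto)
    then show ?thesis using that by (auto simp: Om_def)
  qed
  have Om_last: "1 - (\<Sum>i<m. y i) - \<bar>y m\<bar> > 0" if "y \<in> Om" for y
  proof -
    have "(\<Sum>i<m. y i) \<le> (\<Sum>i<m. c0 + \<bar>y i - c0\<bar>)"
      by (rule sum_mono) auto
    also have "\<dots> = real m * c0 + (\<Sum>i<m. \<bar>y i - c0\<bar>)" by (simp add: sum.distrib)
    finally have "(\<Sum>i<m. y i) + \<bar>y m\<bar> < real m * c0 + c0 / 2"
      using that by (auto simp: Om_def)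
    moreover have "real m * c0 + c0 / 2 < 1" using c0m c0 by (simp add: algebra_simps)
    ultimately show ?thesis by linarith
  qed
  have h_nn: "h y v \<ge> 0" if "y \<in> Om" for y v
    using Om_pos[OF that, of "idx v"] Om_last[OF that] c0
    by (auto simp: h_def)
  have hX: "h y \<in> X" if "y \<in> Om" for y
  proof (cases "y m \<ge> 0")
    case True
    show ?thesis unfolding X_def
    proof (rule inX[OF sc abc(1)])
      show "0 \<le> h y v" for v using h_nn[OF that] .
      show "h y v \<noteq> 0 \<Longrightarrow> v \<in> insert a R" for v
        using True hb hout by (cases "v = b") auto
      show "(\<Sum>v\<in>insert a R. h y v) = 1"
        using sR[of y] abc True finR by (simp add: ha)
    qed
  next
    case False
    show ?thesis unfolding X_def
    proof (rule inX[OF sc abc(2)])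
      show "0 \<le> h y v" for v using h_nn[OF that] .
      show "h y v \<noteq> 0 \<Longrightarrow> v \<in> insert b R" for v
        using False ha hout by (cases "v = a") auto
      show "(\<Sum>v\<in>insert b R. h y v) = 1"
        using sR[of y] abc False finR by (simp add: hb)
    qed
  qed
  have hc: "continuous_map (subtopology (Euclidean_space (Suc m)) Om) T h"
  proof -
    have "continuous_map (subtopology (Euclidean_space (Suc m)) Om) euclideanreal (\<lambda>y. h y v)" for v
      by (cases "v \<in> R"; cases "idx v < m"; cases "v = a"; cases "v = b")
         (simp_all add: h_def cm_E_proj continuous_intros)
    then have "continuous_map (subtopology (Euclidean_space (Suc m)) Om) (powertop_real UNIV) h"
      by (simp add: continuous_map_componentwise_UNIV)
    moreover have "h \<in> topspace (subtopology (Euclidean_space (Suc m)) Om) \<rightarrow> X"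
      using hX Om_def by auto
    ultimately show ?thesis by (simp add: T_def continuous_map_in_subtopology)
  qed
  have hi: "inj_on h Om"
  proof
    fix y y' assume yy: "y \<in> Om" "y' \<in> Om" "h y = h y'"
    show "y = y'"
    proof
      fix i
      consider "i < m" | "i = m" | "i > m" by linarith
      then show "y i = y' i"
      proof cases
        case 1 then show ?thesis using hr[of i y] hr[of i y'] yy(3) by simp
      next
        case 2
        have "h y a - h y b = h y' a - h y' b" using yy(3) by simp
        then show ?thesis using 2 by (simp add: ha hb)
      next
        case 3 then show ?thesis using yy(1,2) by (simp add: Om_def topspace_Euclidean_space)
      qed
    qed
  qed
  define y0 where "y0 = (\<lambda>i. if i < m then c0 else 0)"
  have y0Om: "y0 \<in> Om" using c0 by (simp add: Om_def y0_def topspace_Euclidean_space)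
  have hy0: "h y0 = p"
  proof
    fix v
    show "h y0 v = p v"
    proof (cases "v \<in> R")
      case True
      then obtain j where j: "j < Suc m" "v = r j" using Rr by blast
      have "1 - real m * c0 = c0" using c0m by (simp add: algebra_simps)
      then show ?thesis using j True hr[of j y0] by (simp add: y0_def p_def)
    next
      case False
      then show ?thesis using abc by (simp add: h_def p_def y0_def)
    qed
  qed
  obtain V where V: "openin T V" "p \<in> V" "V \<subseteq> h ` Om"
    using iod_nbhd[OF hom[folded X_def, folded T_def] Omo hc hi y0Om] hy0 by auto
  have Vc: "x c = 0" if "x \<in> V" for x
    using that V(3) hout abc by auto
  define w where "w = (\<lambda>v. (if v = c then 1 else 0) - p v)"
  obtain t where t: "t > 0" "\<And>s. 0 \<le> s \<and> s \<le> t \<Longrightarrow> (\<lambda>v. p v + s * w v) \<in> X \<Longrightarrow> (\<lambda>v. p v + s * w v) \<in> V"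
    using openin_ray[OF V(1)[unfolded T_def] V(2), of w] by blast
  define s where "s = min t 1"
  have s: "0 < s" "s \<le> t" "s \<le> 1" using t by (auto simp: s_def)
  have qX: "(\<lambda>v. p v + s * w v) \<in> X" unfolding X_def
  proof (rule inX[OF sc abc(3)])
    show "0 \<le> p v + s * w v" for v
      using s c0 abc by (auto simp: p_def w_def algebra_simps mult_left_le)
    show "p v + s * w v \<noteq> 0 \<Longrightarrow> v \<in> insert c R" for v
      by (auto simp: p_def w_def split: if_splits)
    have e1: "(\<Sum>v\<in>R. p v + s * w v) = (\<Sum>v\<in>R. c0 - s * c0)"
      by (rule sum.cong) (use abc in \<open>auto simp: p_def w_def algebra_simps\<close>)
    have "(\<Sum>v\<in>insert c R. p v + s * w v) = (p c + s * w c) + (\<Sum>v\<in>R. p v + s * w v)"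
      using abc finR by simp
    also have "\<dots> = s + (\<Sum>v\<in>R. c0 - s * c0)" using e1 abc by (simp add: p_def w_def)
    also have "\<dots> = s + real (Suc m) * (c0 - s * c0)" using R(2) by simp
    also have "\<dots> = 1"
    proof -
      have "real (Suc m) * (c0 - s * c0) = (1 - s) * (real (Suc m) * c0)" by (simp add: algebra_simps)
      then show ?thesis using c0m by (simp only:) simp
    qed
    finally show "(\<Sum>v\<in>insert c R. p v + s * w v) = 1" .
  qed
  have "(\<lambda>v. p v + s * w v) \<in> V" using t(2)[OF _ qX] s by simp
  then have "p c + s * w c = 0" using Vc by fastforce
  then show False using abc s by (simp add: p_def w_def)
qed

lemma facet_over_ridge:
  assumes sc: "simplicial_complex \<Delta>" and F: "F \<in> facets \<Delta>" "card F = Suc (Suc m)"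
    and R: "card R = Suc m" "R \<subseteq> F"
  shows "\<exists>x. x \<notin> R \<and> F = insert x R"
proof -
  have finF: "finite F" using F sc by (auto simp: facets_def simplicial_complex_def)
  have "card (F - R) = 1" using card_Diff_subset[OF finite_subset[OF R(2) finF] R(2)] F R by simp
  then obtain x where "F - R = {x}" by (metis One_nat_def card_1_singletonE)
  then show ?thesis using R(2) by blast
qed

lemma ridge_exactly_two:
  assumes sc: "simplicial_complex \<Delta>"
    and hom: "subtopology (powertop_real UNIV) (geom_realization \<Delta>) homeomorphic_space nsphere (Suc m)"
    and fac: "\<forall>F\<in>facets \<Delta>. card F = Suc (Suc m)"
    and R: "R \<in> \<Delta>" "card R = Suc m"
  shows "\<exists>a b. a \<noteq> b \<and> a \<notin> R \<and> b \<notin> R \<and> {F \<in> facets \<Delta>. R \<subseteq> F} = {insert a R, insert b R}"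
proof -
  define A where "A = {x. x \<notin> R \<and> insert x R \<in> facets \<Delta>}"
  have Aeq: "{F \<in> facets \<Delta>. R \<subseteq> F} = (\<lambda>x. insert x R) ` A"
  proof
    show "{F \<in> facets \<Delta>. R \<subseteq> F} \<subseteq> (\<lambda>x. insert x R) ` A"
    proof
      fix F assume "F \<in> {F \<in> facets \<Delta>. R \<subseteq> F}"
      then have F: "F \<in> facets \<Delta>" "R \<subseteq> F" by auto
      then obtain x where "x \<notin> R" "F = insert x R" using facet_over_ridge[OF sc F(1) _ R(2) F(2)] fac by blast
      then show "F \<in> (\<lambda>x. insert x R) ` A" using F by (auto simp: A_def)
    qed
    show "(\<lambda>x. insert x R) ` A \<subseteq> {F \<in> facets \<Delta>. R \<subseteq> F}" by (auto simp: A_def)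
  qed
  have facD: "F \<in> facets \<Delta> \<Longrightarrow> F \<in> \<Delta>" for F by (simp add: facets_def)
  obtain F0 where F0: "F0 \<in> facets \<Delta>" "R \<subseteq> F0" using face_in_facet[OF sc R(1)] by blast
  then obtain a where a: "a \<in> A" using Aeq by blast
  have "\<exists>b. b \<in> A \<and> b \<noteq> a"
  proof (rule ccontr)
    assume "\<not> ?thesis"
    then have only: "F \<in> facets \<Delta> \<Longrightarrow> R \<subseteq> F \<Longrightarrow> F = insert a R" for F using Aeq by blast
    show False using ridge_not_one[OF sc hom R _ _ only] a by (auto simp: A_def)
  qed
  then obtain b where b: "b \<in> A" "b \<noteq> a" by blast
  have "A = {a, b}"
  proof (rule ccontr)
    assume "A \<noteq> {a, b}"
    then obtain c where c: "c \<in> A" "c \<noteq> a" "c \<noteq> b" using a b by blast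
    show False
      using ridge_not_three[OF sc hom R, of a b c] a b c facD by (auto simp: A_def)
  qed
  then show ?thesis using Aeq a b by (auto simp: A_def)
qed

lemma card_filter_sum: "finite A \<Longrightarrow> card {x\<in>A. P x} = (\<Sum>x\<in>A. if P x then 1 else 0 :: nat)"
  by (simp add: sum.inter_filter[symmetric])

lemma ex1_singleton: "(\<exists>!x. P x) \<longleftrightarrow> (\<exists>x. Collect P = {x})"
proof
  assume "\<exists>!x. P x" then obtain x where x: "P x" "\<And>y. P y \<Longrightarrow> y = x" by blast
  have "Collect P = {x}"
  proof (rule Set.set_eqI)
    fix y show "y \<in> Collect P \<longleftrightarrow> y \<in> {x}" using x by blast
  qed
  then show "\<exists>x. Collect P = {x}" by blast
next
  assume "\<exists>x. Collect P = {x}" then obtain x where x: "Collect P = {x}" ..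
  then have "P x" "\<And>y. P y \<Longrightarrow> y = x" by (auto simp: set_eq_iff)
  then show "\<exists>!x. P x" by blast
qed

locale pmc =
  fixes \<Delta> :: "'a set set" and d :: nat
  assumes sc: "simplicial_complex \<Delta>"
    and fac: "\<forall>F\<in>facets \<Delta>. card F = d"
    and pm: "\<And>R. R \<in> \<Delta> \<Longrightarrow> card R = d - 1 \<Longrightarrow>
       \<exists>a b. a \<noteq> b \<and> a \<notin> R \<and> b \<notin> R \<and> {F \<in> facets \<Delta>. R \<subseteq> F} = {insert a R, insert b R}"
    and d1: "d \<ge> 1"
begin

lemma facet_in: "F \<in> facets \<Delta> \<Longrightarrow> F \<in> \<Delta>" by (simp add: facets_def)
lemma finD: "finite \<Delta>" using sc by (simp add: simplicial_complex_def)
lemma fin_facets: "finite (facets \<Delta>)" using finD by (simp add: facets_def)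
lemma facet_fin: "F \<in> facets \<Delta> \<Longrightarrow> finite F" using sc facet_in face_finite by blast
lemma facet_card: "F \<in> facets \<Delta> \<Longrightarrow> card F = d" using fac by blast

lemma face_le: "\<sigma> \<in> \<Delta> \<Longrightarrow> card \<sigma> \<le> d"
  using face_in_facet[OF sc] facet_fin facet_card by (metis card_mono)

lemma nbr_ex: assumes F: "F \<in> facets \<Delta>" and v: "v \<in> F"
  shows "\<exists>!G. G \<in> facets \<Delta> \<and> G \<noteq> F \<and> F - {v} \<subseteq> G"
proof -
  define R where "R = F - {v}"
  have R: "R \<in> \<Delta>" using face_sub[OF sc facet_in[OF F]] R_def by blast
  have cR: "card R = d - 1" using facet_card[OF F] facet_fin[OF F] v R_def by simp
  obtain a b where ab: "a \<noteq> b" "a \<notin> R" "b \<notin> R"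
    "{G \<in> facets \<Delta>. R \<subseteq> G} = {insert a R, insert b R}"
    using pm[OF R cR] by blast
  have ne: "insert a R \<noteq> insert b R" using ab by blast
  have mem: "G \<in> facets \<Delta> \<and> R \<subseteq> G \<longleftrightarrow> G = insert a R \<or> G = insert b R" for G
    using ab(4) by (simp add: set_eq_iff)
  have FR: "F \<in> facets \<Delta> \<and> R \<subseteq> F" using F R_def by blast
  have Fin: "F = insert a R \<or> F = insert b R" using mem[of F] FR by simp
  show ?thesis unfolding R_def[symmetric]
  proof (cases "F = insert a R")
    case True
    show "\<exists>!G. G \<in> facets \<Delta> \<and> G \<noteq> F \<and> R \<subseteq> G"
    proof (rule ex1I[of _ "insert b R"])
      show "insert b R \<in> facets \<Delta> \<and> insert b R \<noteq> F \<and> R \<subseteq> insert b R"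
        using mem[of "insert b R"] ne True by auto
      fix G assume "G \<in> facets \<Delta> \<and> G \<noteq> F \<and> R \<subseteq> G"
      then show "G = insert b R" using mem[of G] True by auto
    qed
  next
    case False
    then have Fb: "F = insert b R" using Fin by simp
    show "\<exists>!G. G \<in> facets \<Delta> \<and> G \<noteq> F \<and> R \<subseteq> G"
    proof (rule ex1I[of _ "insert a R"])
      show "insert a R \<in> facets \<Delta> \<and> insert a R \<noteq> F \<and> R \<subseteq> insert a R"
        using mem[of "insert a R"] ne Fb by auto
      fix G assume "G \<in> facets \<Delta> \<and> G \<noteq> F \<and> R \<subseteq> G"
      then show "G = insert a R" using mem[of G] Fb by auto
    qed
  qed
qed

definition nbr :: "'a set \<Rightarrow> 'a \<Rightarrow> 'a set" where
  "nbr F v = (THE G. G \<in> facets \<Delta> \<and> G \<noteq> F \<and> F - {v} \<subseteq> G)"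

lemma nbr: assumes "F \<in> facets \<Delta>" "v \<in> F"
  shows "nbr F v \<in> facets \<Delta>" "nbr F v \<noteq> F" "F - {v} \<subseteq> nbr F v"
  using theI'[OF nbr_ex[OF assms]] unfolding nbr_def by auto

lemma nbr_unique: assumes "F \<in> facets \<Delta>" "v \<in> F" "G \<in> facets \<Delta>" "G \<noteq> F" "F - {v} \<subseteq> G"
  shows "G = nbr F v"
  using the1_equality[OF nbr_ex[OF assms(1,2)], of G] assms unfolding nbr_def by auto

lemma nbr_notin: assumes F: "F \<in> facets \<Delta>" and v: "v \<in> F" shows "v \<notin> nbr F v"
proof
  assume "v \<in> nbr F v"
  then have "F \<subseteq> nbr F v" using nbr(3)[OF F v] by blast
  moreover have "card F = card (nbr F v)" using facet_card F nbr(1)[OF F v] by simp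
  ultimately have "F = nbr F v" using card_subset_eq facet_fin nbr(1)[OF F v] by metis
  then show False using nbr(2)[OF F v] by simp
qed

lemma adj_nbr: assumes F: "F \<in> facets \<Delta>" and v: "v \<in> F" shows "fr_adj \<Delta> d F (nbr F v)"
proof -
  have R: "F - {v} \<in> \<Delta>" using face_sub[OF sc facet_in[OF F]] by blast
  have cR: "card (F - {v}) = d - 1" using facet_card[OF F] facet_fin[OF F] v by simp
  show ?thesis unfolding fr_adj_def using F nbr[OF F v] R cR by (metis Diff_subset)
qed

lemma adj_is_nbr: assumes "fr_adj \<Delta> d F G" shows "\<exists>v\<in>F. G = nbr F v"
proof -
  obtain R where R: "R \<in> \<Delta>" "card R = d - 1" "R \<subseteq> F" "R \<subseteq> G" and F: "F \<in> facets \<Delta>"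
    and G: "G \<in> facets \<Delta>" "G \<noteq> F"
    using assms unfolding fr_adj_def by blast
  have "card (F - R) = 1"
    using card_Diff_subset[OF finite_subset[OF R(3) facet_fin[OF F]] R(3)] facet_card[OF F] R(2) d1 by simp
  then obtain v where v: "F - R = {v}" by (metis One_nat_def card_1_singletonE)
  then have "R = F - {v}" "v \<in> F" using R(3) by auto
  then show ?thesis using nbr_unique[OF F \<open>v \<in> F\<close> G] R(4) by blast
qed

lemma nbr_inj: assumes F: "F \<in> facets \<Delta>" shows "inj_on (nbr F) F"
proof
  fix v v' assume vv: "v \<in> F" "v' \<in> F" "nbr F v = nbr F v'"
  show "v = v'"
  proof (rule ccontr)
    assume "v \<noteq> v'"
    then have "v' \<in> nbr F v" using nbr(3)[OF F vv(1)] vv(2) by blast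
    then show False using nbr_notin[OF F vv(2)] vv(3) by simp
  qed
qed

lemma adj_sym: "fr_adj \<Delta> d F G \<Longrightarrow> fr_adj \<Delta> d G F"
  unfolding fr_adj_def by blast

definition Wout :: "('a set \<times> 'a set) set \<Rightarrow> 'a set \<Rightarrow> 'a set" where
  "Wout Or F = {v \<in> F. (F, nbr F v) \<in> Or}"

definition sinks :: "('a set \<times> 'a set) set \<Rightarrow> 'a set \<Rightarrow> 'a set set" where
  "sinks Or \<sigma> = {F \<in> V_sets \<Delta> \<sigma>. \<forall>G\<in>V_sets \<Delta> \<sigma>. (F, G) \<notin> Or}"

context
  fixes Or assumes ori: "orientation \<Delta> d Or"
begin

lemma or_adj: "(a, b) \<in> Or \<Longrightarrow> fr_adj \<Delta> d a b"
  using ori unfolding orientation_def by blast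

lemma or_one: "fr_adj \<Delta> d a b \<Longrightarrow> (a, b) \<in> Or \<longleftrightarrow> (b, a) \<notin> Or"
  using ori unfolding orientation_def by blast

lemma or_fin: "finite Or"
proof -
  have "Or \<subseteq> facets \<Delta> \<times> facets \<Delta>" using or_adj unfolding fr_adj_def by auto
  then show ?thesis using fin_facets finite_subset by blast
qed

lemma indeg: assumes F: "F \<in> facets \<Delta>" shows "indegree Or F = card F - card (Wout Or F)"
proof -
  have "{G. (G, F) \<in> Or} = nbr F ` (F - Wout Or F)"
  proof
    show "{G. (G, F) \<in> Or} \<subseteq> nbr F ` (F - Wout Or F)"
    proof
      fix G assume "G \<in> {G. (G, F) \<in> Or}"
      then have GF: "(G, F) \<in> Or" by simp
      then have adj: "fr_adj \<Delta> d F G" using or_adj adj_sym by blast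
      then obtain v where v: "v \<in> F" "G = nbr F v" using adj_is_nbr by blast
      have "(F, G) \<notin> Or" using or_one[OF adj] GF by blast
      then show "G \<in> nbr F ` (F - Wout Or F)" using v by (auto simp: Wout_def)
    qed
    show "nbr F ` (F - Wout Or F) \<subseteq> {G. (G, F) \<in> Or}"
    proof
      fix G assume "G \<in> nbr F ` (F - Wout Or F)"
      then obtain v where v: "v \<in> F" "(F, nbr F v) \<notin> Or" "G = nbr F v" by (auto simp: Wout_def)
      then show "G \<in> {G. (G, F) \<in> Or}" using or_one[OF adj_nbr[OF F v(1)]] by simp
    qed
  qed
  moreover have "card (nbr F ` (F - Wout Or F)) = card (F - Wout Or F)"
    using nbr_inj[OF F] by (meson Diff_subset card_image inj_on_subset)
  moreover have "card (F - Wout Or F) = card F - card (Wout Or F)"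
    using facet_fin[OF F] by (simp add: Wout_def card_Diff_subset finite_subset)
  ultimately show ?thesis by (simp add: indegree_def)
qed

lemma indeg_le: "F \<in> facets \<Delta> \<Longrightarrow> indegree Or F \<le> d"
  using indeg facet_card by simp

lemma sink_iff: assumes F: "F \<in> facets \<Delta>" and s: "\<sigma> \<subseteq> F"
  shows "(\<forall>G\<in>V_sets \<Delta> \<sigma>. (F, G) \<notin> Or) \<longleftrightarrow> Wout Or F \<subseteq> \<sigma>"
proof
  assume H: "\<forall>G\<in>V_sets \<Delta> \<sigma>. (F, G) \<notin> Or"
  show "Wout Or F \<subseteq> \<sigma>"
  proof
    fix v assume v: "v \<in> Wout Or F"
    then have vF: "v \<in> F" and e: "(F, nbr F v) \<in> Or" by (auto simp: Wout_def)
    show "v \<in> \<sigma>"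
    proof (rule ccontr)
      assume "v \<notin> \<sigma>"
      then have "\<sigma> \<subseteq> nbr F v" using s nbr(3)[OF F vF] by blast
      then have "nbr F v \<in> V_sets \<Delta> \<sigma>" using nbr(1)[OF F vF] by (simp add: V_sets_def)
      then show False using H e by blast
    qed
  qed
next
  assume W: "Wout Or F \<subseteq> \<sigma>"
  show "\<forall>G\<in>V_sets \<Delta> \<sigma>. (F, G) \<notin> Or"
  proof (intro ballI notI)
    fix G assume G: "G \<in> V_sets \<Delta> \<sigma>" and e: "(F, G) \<in> Or"
    obtain v where v: "v \<in> F" "G = nbr F v" using adj_is_nbr[OF or_adj[OF e]] by blast
    then have "v \<in> Wout Or F" using e by (simp add: Wout_def)
    then have "v \<in> G" using W G by (auto simp: V_sets_def)
    then show False using nbr_notin[OF F v(1)] v(2) by simp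
  qed
qed

lemma count_F: assumes F: "F \<in> facets \<Delta>"
  shows "card {\<sigma> \<in> \<Delta>. \<sigma> \<subseteq> F \<and> Wout Or F \<subseteq> \<sigma>} = 2 ^ indegree Or F"
proof -
  define W where "W = Wout Or F"
  have WF: "W \<subseteq> F" by (auto simp: W_def Wout_def)
  have eq: "{\<sigma> \<in> \<Delta>. \<sigma> \<subseteq> F \<and> W \<subseteq> \<sigma>} = (\<lambda>\<tau>. \<tau> \<union> W) ` Pow (F - W)"
  proof
    show "{\<sigma> \<in> \<Delta>. \<sigma> \<subseteq> F \<and> W \<subseteq> \<sigma>} \<subseteq> (\<lambda>\<tau>. \<tau> \<union> W) ` Pow (F - W)"
    proof
      fix \<sigma> assume "\<sigma> \<in> {\<sigma> \<in> \<Delta>. \<sigma> \<subseteq> F \<and> W \<subseteq> \<sigma>}"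
      then have "\<sigma> = (\<sigma> - W) \<union> W" "\<sigma> - W \<in> Pow (F - W)" by auto
      then show "\<sigma> \<in> (\<lambda>\<tau>. \<tau> \<union> W) ` Pow (F - W)" by blast
    qed
    show "(\<lambda>\<tau>. \<tau> \<union> W) ` Pow (F - W) \<subseteq> {\<sigma> \<in> \<Delta>. \<sigma> \<subseteq> F \<and> W \<subseteq> \<sigma>}"
    proof
      fix \<sigma> assume "\<sigma> \<in> (\<lambda>\<tau>. \<tau> \<union> W) ` Pow (F - W)"
      then obtain \<tau> where t: "\<tau> \<subseteq> F - W" "\<sigma> = \<tau> \<union> W" by auto
      then have sF: "\<sigma> \<subseteq> F" using WF by auto
      show "\<sigma> \<in> {\<sigma> \<in> \<Delta>. \<sigma> \<subseteq> F \<and> W \<subseteq> \<sigma>}" using face_sub[OF sc facet_in[OF F] sF] sF t by auto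
    qed
  qed
  have inj: "inj_on (\<lambda>\<tau>. \<tau> \<union> W) (Pow (F - W))"
    by (rule inj_onI) blast
  have "card {\<sigma> \<in> \<Delta>. \<sigma> \<subseteq> F \<and> W \<subseteq> \<sigma>} = 2 ^ card (F - W)"
    using eq card_image[OF inj] facet_fin[OF F] by (simp add: card_Pow)
  moreover have "card (F - W) = indegree Or F"
    using indeg[OF F] facet_fin[OF F] WF by (simp add: W_def card_Diff_subset finite_subset)
  ultimately show ?thesis by (simp add: W_def)
qed

lemma f_orient_eq: "f_orient \<Delta> d Or = (\<Sum>F\<in>facets \<Delta>. 2 ^ indegree Or F)"
proof -
  have "f_orient \<Delta> d Or = (\<Sum>k\<in>{0..d}. \<Sum>F\<in>{F. F \<in> facets \<Delta> \<and> indegree Or F = k}. 2 ^ indegree Or F)"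
    unfolding f_orient_def h_vec_def by (rule sum.cong) auto
  also have "\<dots> = (\<Sum>F\<in>facets \<Delta>. 2 ^ indegree Or F)"
    by (rule sum.group) (use fin_facets indeg_le in auto)
  finally show ?thesis .
qed

lemma double_count: "(\<Sum>F\<in>facets \<Delta>. 2 ^ indegree Or F) = (\<Sum>\<sigma>\<in>\<Delta>. card (sinks Or \<sigma>))"
proof -
  have "(\<Sum>F\<in>facets \<Delta>. 2 ^ indegree Or F) = (\<Sum>F\<in>facets \<Delta>. card {\<sigma> \<in> \<Delta>. \<sigma> \<subseteq> F \<and> Wout Or F \<subseteq> \<sigma>})"
    using count_F by simp
  also have "\<dots> = (\<Sum>F\<in>facets \<Delta>. \<Sum>\<sigma>\<in>\<Delta>. if \<sigma> \<subseteq> F \<and> Wout Or F \<subseteq> \<sigma> then 1 else 0)"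
    using finD by (simp add: card_filter_sum)
  also have "\<dots> = (\<Sum>\<sigma>\<in>\<Delta>. \<Sum>F\<in>facets \<Delta>. if \<sigma> \<subseteq> F \<and> Wout Or F \<subseteq> \<sigma> then 1 else 0)"
    by (rule sum.swap)
  also have "\<dots> = (\<Sum>\<sigma>\<in>\<Delta>. card {F \<in> facets \<Delta>. \<sigma> \<subseteq> F \<and> Wout Or F \<subseteq> \<sigma>})"
    using fin_facets by (simp add: card_filter_sum)
  also have "\<dots> = (\<Sum>\<sigma>\<in>\<Delta>. card (sinks Or \<sigma>))"
  proof (rule sum.cong[OF refl])
    fix \<sigma> assume "\<sigma> \<in> \<Delta>"
    have "{F \<in> facets \<Delta>. \<sigma> \<subseteq> F \<and> Wout Or F \<subseteq> \<sigma>} = sinks Or \<sigma>"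
      using sink_iff by (auto simp: sinks_def V_sets_def)
    then show "card {F \<in> facets \<Delta>. \<sigma> \<subseteq> F \<and> Wout Or F \<subseteq> \<sigma>} = card (sinks Or \<sigma>)" by simp
  qed
  finally show ?thesis .
qed

lemma sinks_fin: "finite (sinks Or \<sigma>)"
  using fin_facets by (simp add: sinks_def V_sets_def)

lemma sink_exists: assumes ac: "acyclic Or" and s: "\<sigma> \<in> \<Delta>" shows "sinks Or \<sigma> \<noteq> {}"
proof -
  have wf: "wf (Or\<inverse>)" using finite_acyclic_wf_converse[OF or_fin ac] .
  obtain F0 where "F0 \<in> facets \<Delta>" "\<sigma> \<subseteq> F0" using face_in_facet[OF sc s] by blast
  then have "F0 \<in> V_sets \<Delta> \<sigma>" by (simp add: V_sets_def)
  then obtain z where z: "z \<in> V_sets \<Delta> \<sigma>" "\<And>y. (y, z) \<in> Or\<inverse> \<Longrightarrow> y \<notin> V_sets \<Delta> \<sigma>"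
    using wfE_min[OF wf] by metis
  then have "z \<in> sinks Or \<sigma>" by (auto simp: sinks_def)
  then show ?thesis by blast
qed

lemma good_iff: "good_orientation \<Delta> d Or \<longleftrightarrow> (\<forall>\<sigma>\<in>\<Delta>. card (sinks Or \<sigma>) = 1)"
proof -
  have e1: "(\<exists>!F. F \<in> V_sets \<Delta> \<sigma> \<and> (\<forall>G\<in>V_sets \<Delta> \<sigma>. (F, G) \<notin> Or)) \<longleftrightarrow> card (sinks Or \<sigma>) = 1" for \<sigma>
  proof -
    have "(\<exists>!F. F \<in> V_sets \<Delta> \<sigma> \<and> (\<forall>G\<in>V_sets \<Delta> \<sigma>. (F, G) \<notin> Or)) \<longleftrightarrow> (\<exists>F. sinks Or \<sigma> = {F})"
      unfolding sinks_def by (rule ex1_singleton)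
    then show ?thesis using card_1_singleton_iff[of "sinks Or \<sigma>"] by simp
  qed
  have e2: "(\<forall>k\<le>d. \<forall>\<sigma>\<in>\<Delta>. card \<sigma> = d - k \<longrightarrow> Q \<sigma>) \<longleftrightarrow> (\<forall>\<sigma>\<in>\<Delta>. Q \<sigma>)" for Q
  proof
    assume H: "\<forall>k\<le>d. \<forall>\<sigma>\<in>\<Delta>. card \<sigma> = d - k \<longrightarrow> Q \<sigma>"
    show "\<forall>\<sigma>\<in>\<Delta>. Q \<sigma>"
    proof
      fix \<sigma> assume s: "\<sigma> \<in> \<Delta>"
      then have "card \<sigma> = d - (d - card \<sigma>)" using face_le by simp
      then show "Q \<sigma>" using H s by (meson diff_le_self)
    qed
  qed auto
  show ?thesis unfolding good_orientation_def e1 e2 by simp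
qed

lemma f_ge: assumes ac: "acyclic Or" shows "card \<Delta> \<le> f_orient \<Delta> d Or"
proof -
  have "card \<Delta> = (\<Sum>\<sigma>\<in>\<Delta>. 1)" by simp
  also have "\<dots> \<le> (\<Sum>\<sigma>\<in>\<Delta>. card (sinks Or \<sigma>))"
    by (rule sum_mono) (use sink_exists[OF ac] sinks_fin in \<open>auto simp: Suc_le_eq card_gt_0_iff\<close>)
  finally show ?thesis using f_orient_eq double_count by simp
qed

lemma f_eq_iff: assumes ac: "acyclic Or"
  shows "f_orient \<Delta> d Or = card \<Delta> \<longleftrightarrow> good_orientation \<Delta> d Or"
proof -
  have ge: "\<sigma> \<in> \<Delta> \<Longrightarrow> 1 \<le> card (sinks Or \<sigma>)" for \<sigma>
    using sink_exists[OF ac] sinks_fin by (auto simp: Suc_le_eq card_gt_0_iff)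
  have "(\<Sum>\<sigma>\<in>\<Delta>. card (sinks Or \<sigma>)) = (\<Sum>\<sigma>\<in>\<Delta>. 1 + (card (sinks Or \<sigma>) - 1))"
  proof (rule sum.cong[OF refl])
    fix \<sigma> assume "\<sigma> \<in> \<Delta>"
    then have "1 \<le> card (sinks Or \<sigma>)" by (rule ge)
    then show "card (sinks Or \<sigma>) = 1 + (card (sinks Or \<sigma>) - 1)" by simp
  qed
  also have "\<dots> = card \<Delta> + (\<Sum>\<sigma>\<in>\<Delta>. card (sinks Or \<sigma>) - 1)"
    by (simp only: sum.distrib) simp
  finally have "f_orient \<Delta> d Or = card \<Delta> + (\<Sum>\<sigma>\<in>\<Delta>. card (sinks Or \<sigma>) - 1)"
    using f_orient_eq double_count by simp
  then have "f_orient \<Delta> d Or = card \<Delta> \<longleftrightarrow> (\<forall>\<sigma>\<in>\<Delta>. card (sinks Or \<sigma>) - 1 = 0)"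
    using finD by simp
  also have "\<dots> \<longleftrightarrow> (\<forall>\<sigma>\<in>\<Delta>. card (sinks Or \<sigma>) = 1)" using ge by (metis diff_is_0_eq le_antisym)
  finally show ?thesis using good_iff by simp
qed

end

end

lemma shelling_good:
  assumes sc: "simplicial_complex \<Delta>" and sh: "shellable \<Delta> d"
  shows "\<exists>Or. acyclic_orientation \<Delta> d Or \<and> good_orientation \<Delta> d Or"
proof -
  obtain T where Td: "distinct T" and Ts: "set T = facets \<Delta>"
    and Tp: "\<And>i. 0 < i \<Longrightarrow> i < length T \<Longrightarrow> pure_card (Pow (T ! i) \<inter> closure_of_faces {T ! j | j. j < i}) (d - 1)"
    using sh unfolding shellable_def by blast
  define N where "N = length T"
  define f where "f = the_inv_into {..<N} (nth T)"
  have inj: "inj_on (nth T) {..<N}" using inj_on_nth[OF Td] by (simp add: N_def)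
  have fnth: "i < N \<Longrightarrow> f (T ! i) = i" for i using the_inv_into_f_f[OF inj] by (simp add: f_def)
  have nthf: "F \<in> facets \<Delta> \<Longrightarrow> f F < N \<and> T ! f F = F" for F
  proof -
    assume "F \<in> facets \<Delta>"
    then obtain i where "i < N" "F = T ! i" using Ts by (metis N_def in_set_conv_nth)
    then show ?thesis using fnth by simp
  qed
  have finj: "F \<in> facets \<Delta> \<Longrightarrow> G \<in> facets \<Delta> \<Longrightarrow> f F = f G \<Longrightarrow> F = G" for F G
    using nthf by metis
  define Or where "Or = {(x, y). fr_adj \<Delta> d x y \<and> f y < f x}"
  have ori: "orientation \<Delta> d Or"
    unfolding orientation_def
  proof (intro conjI allI impI)
    show "\<forall>(a, b)\<in>Or. fr_adj \<Delta> d a b" by (auto simp: Or_def)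
    fix a b assume ab: "fr_adj \<Delta> d a b"
    then have "a \<in> facets \<Delta>" "b \<in> facets \<Delta>" "a \<noteq> b" by (auto simp: fr_adj_def)
    then have "f a \<noteq> f b" using finj by blast
    moreover have "fr_adj \<Delta> d b a" using ab by (auto simp: fr_adj_def)
    ultimately show "(a, b) \<in> Or \<longleftrightarrow> (b, a) \<notin> Or" using ab by (auto simp: Or_def)
  qed
  have wfm: "wf (inv_image less_than f)" by simp
  have "Or\<inverse> \<subseteq> inv_image less_than f" by (auto simp: Or_def)
  then have "wf (Or\<inverse>)" using wf_subset wfm by blast
  then have ac: "acyclic Or" using wf_acyclic acyclic_converse by blast
  have good: "good_orientation \<Delta> d Or"
    unfolding good_orientation_def
  proof (intro allI impI ballI)
    fix k \<sigma> assume \<sigma>: "\<sigma> \<in> \<Delta>"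
    obtain F1 where "F1 \<in> facets \<Delta>" "\<sigma> \<subseteq> F1" using face_in_facet[OF sc \<sigma>] by blast
    then have "F1 \<in> V_sets \<Delta> \<sigma>" by (simp add: V_sets_def)
    then obtain F0 where F0: "F0 \<in> V_sets \<Delta> \<sigma>" and min: "\<And>y. (y, F0) \<in> inv_image less_than f \<Longrightarrow> y \<notin> V_sets \<Delta> \<sigma>"
      using wfE_min[OF wfm] by metis
    have F0s: "\<forall>G\<in>V_sets \<Delta> \<sigma>. (F0, G) \<notin> Or" using min by (auto simp: Or_def)
    have uniq: "F = F0" if F: "F \<in> V_sets \<Delta> \<sigma>" "\<forall>G\<in>V_sets \<Delta> \<sigma>. (F, G) \<notin> Or" for F
    proof (rule ccontr)
      assume ne: "F \<noteq> F0"
      have Ff: "F \<in> facets \<Delta>" "\<sigma> \<subseteq> F" and F0f: "F0 \<in> facets \<Delta>" "\<sigma> \<subseteq> F0" using F(1) F0 by (auto simp: V_sets_def)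
      have "\<not> f F < f F0" using min F(1) by auto
      moreover have "f F \<noteq> f F0" using finj Ff F0f ne by blast
      ultimately have lt: "f F0 < f F" by simp
      define i where "i = f F"
      define i0 where "i0 = f F0"
      have iN: "i < N" "T ! i = F" using nthf[OF Ff(1)] by (auto simp: i_def)
      have i0N: "T ! i0 = F0" using nthf[OF F0f(1)] by (auto simp: i0_def)
      have i0i: "i0 < i" using lt by (simp add: i_def i0_def)
      define K where "K = Pow (T ! i) \<inter> closure_of_faces {T ! j | j. j < i}"
      have pure: "pure_card K (d - 1)" using Tp[of i] i0i iN by (simp add: K_def N_def)
      have \<sigma>K: "\<sigma> \<in> K" using Ff(2) F0f(2) iN i0N i0i unfolding K_def closure_of_faces_def by blast
      have finF: "finite F" using Ff(1) sc by (auto simp: facets_def simplicial_complex_def)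
      have scK: "simplicial_complex K"
        unfolding simplicial_complex_def
      proof (intro conjI ballI allI impI)
        show "finite K" using finF iN by (simp add: K_def)
        show "K \<noteq> {}" using \<sigma>K by blast
        show "finite x" if "x \<in> K" for x using that finF iN by (auto simp: K_def intro: finite_subset)
        show "y \<in> K" if "x \<in> K" "y \<subseteq> x" for x y using that unfolding K_def closure_of_faces_def by blast
      qed
      obtain \<tau> where \<tau>: "\<tau> \<in> facets K" "\<sigma> \<subseteq> \<tau>" using face_in_facet[OF scK \<sigma>K] by blast
      have c\<tau>: "card \<tau> = d - 1" using pure \<tau>(1) by (simp add: pure_card_def)
      have "\<tau> \<in> K" using \<tau>(1) by (simp add: facets_def)
      then obtain j where j: "j < i" "\<tau> \<subseteq> T ! j" "\<tau> \<subseteq> F" using iN unfolding K_def closure_of_faces_def by blast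
      define G where "G = T ! j"
      have jN: "j < N" using j iN by simp
      have Gf: "G \<in> facets \<Delta>" using jN Ts by (auto simp: G_def N_def)
      have fG: "f G = j" using fnth[OF jN] by (simp add: G_def)
      have GF: "G \<noteq> F" using fG i_def j(1) by auto
      have \<tau>D: "\<tau> \<in> \<Delta>" using face_sub[OF sc _ j(3)] Ff(1) by (simp add: facets_def)
      have adj: "fr_adj \<Delta> d F G" unfolding fr_adj_def using Ff(1) Gf GF \<tau>D c\<tau> j(2,3) by (auto simp: G_def)
      have "(F, G) \<in> Or" using adj fG j(1) by (simp add: Or_def i_def)
      moreover have "G \<in> V_sets \<Delta> \<sigma>" using Gf \<tau>(2) j(2) by (auto simp: V_sets_def G_def)
      ultimately show False using F(2) by blast
    qed
    show "\<exists>!F. F \<in> V_sets \<Delta> \<sigma> \<and> (\<forall>G\<in>V_sets \<Delta> \<sigma>. (F, G) \<notin> Or)"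
      using F0 F0s uniq by blast
  qed
  show ?thesis using ori ac good by (auto simp: acyclic_orientation_def)
qed

theorem proposition3p4:
  fixes \<Delta> :: "'a set set" and d :: nat
  assumes "d \<ge> 3"
    and "is_sphere \<Delta> (d - 1)"
    and "\<forall>F\<in>facets \<Delta>. card F = d"
    and "shellable \<Delta> d"
  shows "Min {f_orient \<Delta> d Or | Or. acyclic_orientation \<Delta> d Or} = card \<Delta> \<and>
    (\<forall>Or. acyclic_orientation \<Delta> d Or \<longrightarrow>
        (good_orientation \<Delta> d Or \<longleftrightarrow>
         f_orient \<Delta> d Or = Min {f_orient \<Delta> d Or' | Or'. acyclic_orientation \<Delta> d Or'}))"
proof -
  have sc: "simplicial_complex \<Delta>"
    and hom: "subtopology (powertop_real UNIV) (geom_realization \<Delta>) homeomorphic_space nsphere (d - 1)"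
    using assms(2) by (auto simp: is_sphere_def)
  define m where "m = d - 2"
  have dm: "d = Suc (Suc m)" using assms(1) by (simp add: m_def)
  have hom': "subtopology (powertop_real UNIV) (geom_realization \<Delta>) homeomorphic_space nsphere (Suc m)"
    using hom dm by simp
  have fac': "\<forall>F\<in>facets \<Delta>. card F = Suc (Suc m)" using assms(3) dm by simp
  have pm: "\<exists>a b. a \<noteq> b \<and> a \<notin> R \<and> b \<notin> R \<and> {F \<in> facets \<Delta>. R \<subseteq> F} = {insert a R, insert b R}"
    if "R \<in> \<Delta>" "card R = d - 1" for R
    using ridge_exactly_two[OF sc hom' fac' that(1)] that(2) dm by simp
  interpret pmc \<Delta> d
    by unfold_locales (use sc assms(1,3) pm in auto)
  define S where "S = {f_orient \<Delta> d Or | Or. acyclic_orientation \<Delta> d Or}"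
  have "S \<subseteq> f_orient \<Delta> d ` Pow (facets \<Delta> \<times> facets \<Delta>)"
  proof
    fix x assume "x \<in> S"
    then obtain Or where Or: "acyclic_orientation \<Delta> d Or" "x = f_orient \<Delta> d Or" by (auto simp: S_def)
    then have "Or \<subseteq> facets \<Delta> \<times> facets \<Delta>"
      unfolding acyclic_orientation_def orientation_def fr_adj_def by auto
    then show "x \<in> f_orient \<Delta> d ` Pow (facets \<Delta> \<times> facets \<Delta>)" using Or by auto
  qed
  then have finS: "finite S" using fin_facets by (meson finite_Pow_iff finite_SigmaI finite_imageI finite_subset)
  obtain Or0 where Or0: "acyclic_orientation \<Delta> d Or0" "good_orientation \<Delta> d Or0"
    using shelling_good[OF sc assms(4)] by blast
  have "f_orient \<Delta> d Or0 = card \<Delta>"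
    using f_eq_iff Or0 by (auto simp: acyclic_orientation_def)
  then have inS: "card \<Delta> \<in> S" using Or0 unfolding S_def by (metis (mono_tags, lifting) mem_Collect_eq)
  have lb: "\<And>y. y \<in> S \<Longrightarrow> card \<Delta> \<le> y"
    using f_ge by (auto simp: S_def acyclic_orientation_def)
  have MinS: "Min S = card \<Delta>" by (rule Min_eqI[OF finS lb inS])
  show ?thesis
    unfolding S_def[symmetric] MinS
    using f_eq_iff by (auto simp: acyclic_orientation_def)
qed

end
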